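(* Let $q(x,y)=ax^2+bxy+cy^2$ with $a,b,c\in\mathbb{Z}$ be an indefinite binary quadratic form whose discriminant $\Delta(q)=b^2-4ac>0$ is not a perfect square, and let $k\in\mathbb{Z}$. Then the equation $q(x,y)=k$ has at most $4$ solutions $(x,y)\in\mathbb{Z}^2$ satisfying $$|x|\le\frac{|k|^{1/4}}{\sqrt{\Delta(q)}}.$$ *)

theory Defs
  imports "HOL-Analysis.Analysis"
begin

end

theory Submission
  imports Defs
begin

lemma real_bound:
  fixes x k D :: int
  assumes D: "D > 0"
    and h: "real_of_int \<bar>x\<bar> \<le> (real_of_int \<bar>k\<bar>) powr (1/4) / sqrt (real_of_int D)"
  shows "(D*x^2)^2 \<le> \<bar>k\<bar>"
proof -
  have sD: "sqrt (real_of_int D) > 0" using D by simp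
  have h1: "real_of_int \<bar>x\<bar> * sqrt (real_of_int D) \<le> (real_of_int \<bar>k\<bar>) powr (1/4)"
    using h sD by (simp add: pos_le_divide_eq)
  have h2: "(real_of_int \<bar>x\<bar> * sqrt (real_of_int D))^4 \<le> ((real_of_int \<bar>k\<bar>) powr (1/4))^4"
    using h1 by (intro power_mono) (use D in auto)
  have e1: "(real_of_int \<bar>x\<bar> * sqrt (real_of_int D))^4 = real_of_int ((D*x^2)^2)"
  proof -
    have "(real_of_int \<bar>x\<bar> * sqrt (real_of_int D))^4 = (real_of_int \<bar>x\<bar>)^4 * (sqrt (real_of_int D))^2 * (sqrt (real_of_int D))^2"
      by (simp add: power_mult_distrib flip: power_add)
    also have "\<dots> = (real_of_int \<bar>x\<bar>)^4 * real_of_int D * real_of_int D"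
      using D by simp
    also have "\<dots> = real_of_int ((D*x^2)^2)"
      by (simp add: power_mult_distrib power_abs algebra_simps power2_eq_square power4_eq_xxxx flip: power_mult)
    finally show ?thesis .
  qed
  have e2: "((real_of_int \<bar>k\<bar>) powr (1/4))^4 = real_of_int \<bar>k\<bar>"
  proof (cases "k = 0")
    case True then show ?thesis by simp
  next
    case False
    then have "((real_of_int \<bar>k\<bar>) powr (1/4))^4 = (real_of_int \<bar>k\<bar>) powr (of_nat 4 * (1/4))"
      by (intro powr_power) auto
    also have "\<dots> = real_of_int \<bar>k\<bar>" by simp
    finally show ?thesis .
  qed
  from h2 e1 e2 have "real_of_int ((D*x^2)^2) \<le> real_of_int \<bar>k\<bar>" by simp
  then show ?thesis by linarith
qed


lemma neg_case:
  fixes s t m k :: int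
  assumes "s^2 = t + 4*m" "m < 0" "t \<ge> 0" "t^2 \<le> -m"
  shows False
proof -
  have "t \<ge> -4*m" using assms(1) by (smt (verit) zero_le_power2)
  then have "t \<ge> 4*t^2" using assms by linarith
  then have "t \<le> 0" by (smt (verit) power2_eq_square mult_le_cancel_left1 assms(3))
  then show False using assms \<open>t \<ge> -4*m\<close> by linarith
qed


lemma pos_case:
  fixes s1 s2 t1 t2 m :: int
  assumes e1: "s1^2 = t1 + 4*m" and e2: "s2^2 = t2 + 4*m" and "m > 0"
    and t1: "t1 \<ge> 0" and t2: "t2 \<ge> 0" and b1: "t1^2 \<le> m" and b2: "t2^2 \<le> m"
  shows "t1 = t2"
proof (rule ccontr)
  assume ne: "t1 \<noteq> t2"
  define u1 where "u1 = \<bar>s1\<bar>"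
  define u2 where "u2 = \<bar>s2\<bar>"
  have u1s: "u1^2 = t1 + 4*m" using e1 by (simp add: u1_def)
  have u2s: "u2^2 = t2 + 4*m" using e2 by (simp add: u2_def)
  have ge: "u1 \<ge> 0" "u2 \<ge> 0" by (auto simp: u1_def u2_def)
  have "\<And>u t. u \<ge> 0 \<Longrightarrow> t \<ge> 0 \<Longrightarrow> u^2 \<ge> 4 * t^2 \<Longrightarrow> u \<ge> 2 * (t::int)"
  proof -
    fix u t :: int assume "u \<ge> 0" "t \<ge> 0" "u^2 \<ge> 4*t^2"
    then have "(2*t)^2 \<le> u^2" by (simp add: power_mult_distrib)
    then show "u \<ge> 2*t" using \<open>u \<ge> 0\<close> by (rule power2_le_imp_le)
  qed
  note mono = this
  have a1: "u1 \<ge> 2*t1" "u1 \<ge> 2*t2" "u2 \<ge> 2*t1" "u2 \<ge> 2*t2"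
    using mono[of u1 t1] mono[of u1 t2] mono[of u2 t1] mono[of u2 t2] ge t1 t2 u1s u2s b1 b2
    by linarith+
  have diff: "(u1 - u2) * (u1 + u2) = t1 - t2" using u1s u2s by (simp add: algebra_simps power2_eq_square)
  have "u1 \<noteq> u2" using diff ne by auto
  then have "\<bar>u1 - u2\<bar> \<ge> 1" by linarith
  have eq: "\<bar>t1 - t2\<bar> = \<bar>u1 - u2\<bar> * (u1 + u2)"
    using diff ge by (metis abs_mult abs_of_nonneg add_nonneg_nonneg)
  have "\<bar>u1 - u2\<bar> * (u1 + u2) \<ge> 1 * (u1 + u2)"
    using \<open>\<bar>u1 - u2\<bar> \<ge> 1\<close> ge by (intro mult_right_mono) auto
  then have "\<bar>t1 - t2\<bar> \<ge> u1 + u2" using eq by simp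
  then show False using a1 t1 t2 ne by linarith
qed

theorem lemma2:
  fixes a b c k :: int
  assumes "b^2 - 4*a*c > 0"
    and "\<not> (\<exists>m::int. b^2 - 4*a*c = m^2)"
  shows "finite {(x::int, y::int). a*x^2 + b*x*y + c*y^2 = k \<and>
                  real_of_int \<bar>x\<bar> \<le> (real_of_int \<bar>k\<bar>) powr (1/4) / sqrt (real_of_int (b^2 - 4*a*c))}
         \<and> card {(x::int, y::int). a*x^2 + b*x*y + c*y^2 = k \<and>
                  real_of_int \<bar>x\<bar> \<le> (real_of_int \<bar>k\<bar>) powr (1/4) / sqrt (real_of_int (b^2 - 4*a*c))} \<le> 4"
proof -
  define D where "D = b^2 - 4*a*c"
  define S where "S = {(x::int, y::int). a*x^2 + b*x*y + c*y^2 = k \<and>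
                  real_of_int \<bar>x\<bar> \<le> (real_of_int \<bar>k\<bar>) powr (1/4) / sqrt (real_of_int (b^2 - 4*a*c))}"
  have D0: "D > 0" using assms(1) by (simp add: D_def)
  have c0: "c \<noteq> 0"
  proof
    assume "c = 0"
    then have "b^2 - 4*a*c = b^2" by simp
    then show False using assms(2) by blast
  qed
  have props: "(2*c*y + b*x)^2 = D*x^2 + 4*(c*k) \<and> (D*x^2)^2 \<le> \<bar>k\<bar>" if "(x,y) \<in> S" for x y
  proof
    have q: "a*x^2 + b*x*y + c*y^2 = k" using that by (simp add: S_def)
    show "(2*c*y + b*x)^2 = D*x^2 + 4*(c*k)"
      unfolding D_def q[symmetric] by (simp add: power2_eq_square algebra_simps)
    have "real_of_int \<bar>x\<bar> \<le> (real_of_int \<bar>k\<bar>) powr (1/4) / sqrt (real_of_int D)"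
      using that by (simp add: S_def D_def)
    then show "(D*x^2)^2 \<le> \<bar>k\<bar>"
      using real_bound[OF D0, of x k] by blast
  qed
  have xsq: "x1^2 = x2^2" if "(x1,y1) \<in> S" "(x2,y2) \<in> S" for x1 y1 x2 y2
  proof -
    have p1: "(2*c*y1 + b*x1)^2 = D*x1^2 + 4*(c*k)" "(D*x1^2)^2 \<le> \<bar>k\<bar>" using props that(1) by auto
    have p2: "(2*c*y2 + b*x2)^2 = D*x2^2 + 4*(c*k)" "(D*x2^2)^2 \<le> \<bar>k\<bar>" using props that(2) by auto
    have n1: "D*x1^2 \<ge> 0" "D*x2^2 \<ge> 0" using D0 by auto
    have kc: "\<bar>k\<bar> \<le> \<bar>c*k\<bar>" using c0 by (auto simp: abs_mult mult_le_cancel_right1)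
    have "D*x1^2 = D*x2^2"
    proof (cases "c*k = 0")
      case True
      then have "k = 0" using c0 by simp
      then have "(D*x1^2)^2 \<le> 0" "(D*x2^2)^2 \<le> 0" using p1 p2 by auto
      then show ?thesis by auto
    next
      case False
      show ?thesis
      proof (cases "c*k > 0")
        case True
        have kc': "\<bar>k\<bar> \<le> c*k" using kc True by simp
        show ?thesis
          by (rule pos_case[OF p1(1) p2(1) True n1]) (use p1(2) p2(2) kc' in linarith)+
      next
        case F: False
        then have "c*k < 0" using False by linarith
        have kc': "\<bar>k\<bar> \<le> -(c*k)" using kc \<open>c*k < 0\<close> by simp
        have False by (rule neg_case[OF p1(1) \<open>c*k < 0\<close> n1(1)]) (use p1(2) kc' in linarith)
        then show ?thesis ..
      qed
    qed
    then show ?thesis using D0 by simp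
  qed
  have yuniq: "y1 = y2 \<or> c*(y1+y2) + b*x = 0" if "(x,y1) \<in> S" "(x,y2) \<in> S" for x y1 y2
  proof -
    have "a*x^2 + b*x*y1 + c*y1^2 = k" "a*x^2 + b*x*y2 + c*y2^2 = k" using that by (auto simp: S_def)
    then have "(y1 - y2) * (c*(y1+y2) + b*x) = 0" by (simp add: algebra_simps power2_eq_square)
    then show ?thesis by auto
  qed
  have symm: "(-x, -y) \<in> S" if "(x,y) \<in> S" for x y
    using that by (simp add: S_def power2_eq_square)
  have main: "finite S \<and> card S \<le> 4"
  proof (cases "S = {}")
    case True then show ?thesis by simp
  next
    case False
    then obtain x0 y0 where p0: "(x0,y0) \<in> S" by auto
    define y1 where "y1 = (- b*x0 - c*y0) div c"
    have sub: "S \<subseteq> set [(x0,y0),(x0,y1),(-x0,-y0),(-x0,-y1)]"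
    proof
      fix p assume "p \<in> S"
      obtain x y where p: "p = (x,y)" by (cases p)
      have pS: "(x,y) \<in> S" using \<open>p \<in> S\<close> p by simp
      have fx: "y = y0 \<or> y = y1" if "(x0,y) \<in> S" for y
      proof -
        from yuniq[OF p0 that] have "y0 = y \<or> c*(y0+y) + b*x0 = 0" .
        then show ?thesis
        proof
          assume "c*(y0+y) + b*x0 = 0"
          then have "c*y = - b*x0 - c*y0" by (simp add: algebra_simps)
          then have "y = (- b*x0 - c*y0) div c" using c0
            by (metis nonzero_mult_div_cancel_left)
          then show ?thesis by (simp add: y1_def)
        qed auto
      qed
      have "x^2 = x0^2" using xsq[OF pS p0] .
      then have "x = x0 \<or> x = -x0" by (metis power2_eq_iff)
      then show "p \<in> set [(x0,y0),(x0,y1),(-x0,-y0),(-x0,-y1)]"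
      proof
        assume "x = x0" then show ?thesis using fx pS p by auto
      next
        assume "x = -x0"
        then have "(x0, -y) \<in> S" using symm[OF pS] by simp
        then have "-y = y0 \<or> -y = y1" using fx by blast
        then show ?thesis using p \<open>x = -x0\<close> by auto
      qed
    qed
    have "finite S" using sub finite_subset by blast
    moreover have "card S \<le> 4"
      using card_mono[OF _ sub] card_length[of "[(x0,y0),(x0,y1),(-x0,-y0),(-x0,-y1)]"] by simp
    ultimately show ?thesis by simp
  qed
  then show ?thesis unfolding S_def by simp
qed



end
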